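(* Fix $i\in[n]$ such that $m_i=1$. Let $w\in W^i$, $\gamma,\gamma'\in M_i$ with $\gamma'\le\gamma$. Then $w(\gamma')\le w(\gamma)$.
   Context: $\Phi$ is a finite irreducible crystallographic root system with basis $\Pi=\{\alpha_1,\dots,\alpha_n\}$, positive roots $\Phi^+$, highest root $\theta=\sum_i m_i\alpha_i$, Weyl group $W$ with length $\ell$. On the root lattice, $x\le y$ iff $y-x$ is a nonnegative linear combination of positive roots. $M_i=\{\beta\in\Phi^+\mid\beta\ge\alpha_i\}$; $D_r(w)=\{\alpha\in\Pi\mid\ell(ws_\alpha)<\ell(w)\}$; $W^i=\{w\in W\mid D_r(w)\subseteq\{\alpha_i\}\}$. *)

theory Defs
  imports "HOL-Analysis.Analysis"
begin

definition refl :: "'a::euclidean_space \<Rightarrow> 'a \<Rightarrow> 'a" where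
  "refl \<alpha> v = v - (2 * (v \<bullet> \<alpha>) / (\<alpha> \<bullet> \<alpha>)) *\<^sub>R \<alpha>"

definition root_system :: "'a::euclidean_space set \<Rightarrow> bool" where
  "root_system \<Phi> \<longleftrightarrow> finite \<Phi> \<and> 0 \<notin> \<Phi> \<and> span \<Phi> = UNIV \<and>
     (\<forall>\<alpha>\<in>\<Phi>. refl \<alpha> ` \<Phi> \<subseteq> \<Phi>) \<and>
     (\<forall>\<alpha>\<in>\<Phi>. \<forall>c::real. c *\<^sub>R \<alpha> \<in> \<Phi> \<longrightarrow> c = 1 \<or> c = -1)"

definition crystallographic :: "'a::euclidean_space set \<Rightarrow> bool" where
  "crystallographic \<Phi> \<longleftrightarrow> (\<forall>\<alpha>\<in>\<Phi>. \<forall>\<beta>\<in>\<Phi>. 2 * (\<beta> \<bullet> \<alpha>) / (\<alpha> \<bullet> \<alpha>) \<in> \<int>)"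

definition irreducible_rs :: "'a::euclidean_space set \<Rightarrow> bool" where
  "irreducible_rs \<Phi> \<longleftrightarrow> \<not> (\<exists>A B. A \<noteq> {} \<and> B \<noteq> {} \<and> A \<union> B = \<Phi> \<and> A \<inter> B = {} \<and>
       (\<forall>a\<in>A. \<forall>b\<in>B. a \<bullet> b = 0))"

definition is_base :: "'a::euclidean_space set \<Rightarrow> 'a set \<Rightarrow> bool" where
  "is_base \<Phi> \<Delta> \<longleftrightarrow> \<Delta> \<subseteq> \<Phi> \<and> independent \<Delta> \<and>
     (\<forall>\<beta>\<in>\<Phi>. \<exists>c. (\<forall>\<alpha>\<in>\<Delta>. c \<alpha> \<in> \<int>) \<and> \<beta> = (\<Sum>\<alpha>\<in>\<Delta>. c \<alpha> *\<^sub>R \<alpha>) \<and>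
        ((\<forall>\<alpha>\<in>\<Delta>. c \<alpha> \<ge> 0) \<or> (\<forall>\<alpha>\<in>\<Delta>. c \<alpha> \<le> 0)))"

definition pos_roots :: "'a::euclidean_space set \<Rightarrow> 'a set \<Rightarrow> 'a set" where
  "pos_roots \<Phi> \<Delta> = {\<beta>\<in>\<Phi>. \<exists>c. (\<forall>\<alpha>\<in>\<Delta>. c \<alpha> \<ge> 0) \<and> \<beta> = (\<Sum>\<alpha>\<in>\<Delta>. c \<alpha> *\<^sub>R \<alpha>)}"

definition root_le :: "'a::euclidean_space set \<Rightarrow> 'a set \<Rightarrow> 'a \<Rightarrow> 'a \<Rightarrow> bool" where
  "root_le \<Phi> \<Delta> x y \<longleftrightarrow>
     (\<exists>c. (\<forall>\<beta>\<in>pos_roots \<Phi> \<Delta>. c \<beta> \<ge> 0) \<and> y - x = (\<Sum>\<beta>\<in>pos_roots \<Phi> \<Delta>. c \<beta> *\<^sub>R \<beta>))"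

definition highest_root :: "'a::euclidean_space set \<Rightarrow> 'a set \<Rightarrow> 'a \<Rightarrow> bool" where
  "highest_root \<Phi> \<Delta> \<theta> \<longleftrightarrow> \<theta> \<in> pos_roots \<Phi> \<Delta> \<and> (\<forall>\<beta>\<in>\<Phi>. root_le \<Phi> \<Delta> \<beta> \<theta>)"

inductive_set weyl_group :: "'a::euclidean_space set \<Rightarrow> ('a \<Rightarrow> 'a) set" for \<Phi> where
  id_in: "id \<in> weyl_group \<Phi>"
| refl_comp: "w \<in> weyl_group \<Phi> \<Longrightarrow> \<alpha> \<in> \<Phi> \<Longrightarrow> refl \<alpha> \<circ> w \<in> weyl_group \<Phi>"

definition word_map :: "'a::euclidean_space list \<Rightarrow> 'a \<Rightarrow> 'a" where
  "word_map ws = foldr (\<lambda>\<alpha> f. refl \<alpha> \<circ> f) ws id"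

definition weyl_length :: "'a::euclidean_space set \<Rightarrow> ('a \<Rightarrow> 'a) \<Rightarrow> nat" where
  "weyl_length \<Delta> w = (LEAST k. \<exists>ws. set ws \<subseteq> \<Delta> \<and> length ws = k \<and> w = word_map ws)"

definition right_descents :: "'a::euclidean_space set \<Rightarrow> ('a \<Rightarrow> 'a) \<Rightarrow> 'a set" where
  "right_descents \<Delta> w = {\<alpha>\<in>\<Delta>. weyl_length \<Delta> (w \<circ> refl \<alpha>) < weyl_length \<Delta> w}"

definition min_coset_reps :: "'a::euclidean_space set \<Rightarrow> 'a set \<Rightarrow> 'a \<Rightarrow> ('a \<Rightarrow> 'a) set" where
  "min_coset_reps \<Phi> \<Delta> \<alpha>i = {w \<in> weyl_group \<Phi>. right_descents \<Delta> w \<subseteq> {\<alpha>i}}"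

definition M_set :: "'a::euclidean_space set \<Rightarrow> 'a set \<Rightarrow> 'a \<Rightarrow> 'a set" where
  "M_set \<Phi> \<Delta> \<alpha>i = {\<beta>\<in>pos_roots \<Phi> \<Delta>. root_le \<Phi> \<Delta> \<alpha>i \<beta>}"

end

theory Submission
  imports Defs
begin

lemma refl_linear: "linear (refl a)"
  by (rule linearI) (auto simp: refl_def inner_add_left algebra_simps add_divide_distrib diff_divide_distrib)

lemma refl_inner: "a \<noteq> 0 \<Longrightarrow> refl a x \<bullet> refl a y = x \<bullet> y"
  by (simp add: refl_def inner_diff_left inner_diff_right inner_commute field_simps)

lemma refl_refl: "a \<noteq> 0 \<Longrightarrow> refl a (refl a x) = x"
  by (simp add: refl_def inner_diff_left algebra_simps field_simps)

lemma refl_neg: "refl (-a) = refl a"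
  by (rule ext) (simp add: refl_def)

lemma refl_self: "a \<noteq> 0 \<Longrightarrow> refl a a = -a"
  by (simp add: refl_def scaleR_2)

lemma refl_conj:
  assumes "linear u" "\<And>x y. u x \<bullet> u y = x \<bullet> y"
  shows "refl (u a) (u v) = u (refl a v)"
  using assms by (simp add: refl_def linear_diff linear_scale)

lemma word_map_Nil[simp]: "word_map [] = id" by (simp add: word_map_def)
lemma word_map_Cons[simp]: "word_map (a # ws) = refl a \<circ> word_map ws" by (simp add: word_map_def)
lemma word_map_append: "word_map (xs @ ys) = word_map xs \<circ> word_map ys"
  by (induction xs) auto

lemma word_map_orth:
  assumes "0 \<notin> set ws"
  shows "linear (word_map ws) \<and> (\<forall>x y. word_map ws x \<bullet> word_map ws y = x \<bullet> y)"
  using assms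
proof (induction ws)
  case Nil then show ?case by (simp add: linear_id[unfolded id_def] id_def)
next
  case (Cons a ws)
  then have "linear (refl a \<circ> word_map ws)"
    using linear_compose[OF _ refl_linear] by auto
  then show ?case using Cons by (auto simp: refl_inner comp_def)
qed

locale rs =
  fixes \<Phi> \<Delta> :: "'a::euclidean_space set"
  assumes rs: "root_system \<Phi>" and base: "is_base \<Phi> \<Delta>"
begin

lemma finPhi: "finite \<Phi>" and zPhi: "0 \<notin> \<Phi>" and reflPhi: "\<alpha>\<in>\<Phi> \<Longrightarrow> \<beta> \<in> \<Phi> \<Longrightarrow> refl \<alpha> \<beta> \<in> \<Phi>"
  and multPhi: "\<alpha>\<in>\<Phi> \<Longrightarrow> c *\<^sub>R \<alpha> \<in> \<Phi> \<Longrightarrow> c = 1 \<or> c = -1"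
  and spanPhi: "span \<Phi> = UNIV"
  using rs unfolding root_system_def by (meson image_subset_iff)+

lemma DPhi: "\<Delta> \<subseteq> \<Phi>" and indep: "independent \<Delta>"
  using base unfolding is_base_def by simp_all

lemma finD: "finite \<Delta>" using DPhi finPhi finite_subset by blast

lemma spanD: "span \<Delta> = UNIV"
proof -
  have "\<Phi> \<subseteq> span \<Delta>"
  proof
    fix \<beta> assume "\<beta> \<in> \<Phi>"
    then obtain c where "\<beta> = (\<Sum>\<alpha>\<in>\<Delta>. c \<alpha> *\<^sub>R \<alpha>)" using base unfolding is_base_def by blast
    then show "\<beta> \<in> span \<Delta>" by (simp add: span_sum span_scale span_base)
  qed
  then have "span \<Phi> \<subseteq> span \<Delta>" by (simp add: span_minimal)
  then show ?thesis using spanPhi by auto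
qed

definition cf :: "'a \<Rightarrow> 'a \<Rightarrow> real" where
  "cf v = (SOME c. v = (\<Sum>\<alpha>\<in>\<Delta>. c \<alpha> *\<^sub>R \<alpha>))"

lemma cf_sum: "v = (\<Sum>\<alpha>\<in>\<Delta>. cf v \<alpha> *\<^sub>R \<alpha>)"
proof -
  have "v \<in> span \<Delta>" using spanD by auto
  then have "\<exists>c. v = (\<Sum>\<alpha>\<in>\<Delta>. c \<alpha> *\<^sub>R \<alpha>)" using span_finite[OF finD] by auto
  then show ?thesis unfolding cf_def by (rule someI_ex)
qed

lemma cf_sum': "(\<Sum>\<alpha>\<in>\<Delta>. cf v \<alpha> *\<^sub>R \<alpha>) = v"
  using cf_sum[of v] by metis

lemma cf_unique: assumes "v = (\<Sum>\<alpha>\<in>\<Delta>. c \<alpha> *\<^sub>R \<alpha>)" "\<alpha> \<in> \<Delta>" shows "cf v \<alpha> = c \<alpha>"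
proof (rule ccontr)
  assume ne: "cf v \<alpha> \<noteq> c \<alpha>"
  have "(\<Sum>\<beta>\<in>\<Delta>. (cf v \<beta> - c \<beta>) *\<^sub>R \<beta>) = 0"
    using assms(1) by (simp only: scaleR_diff_left sum_subtractf cf_sum') simp
  then have "dependent \<Delta>" using dependent_finite[OF finD] ne assms(2)
    by (intro iffD2[OF dependent_finite[OF finD]]) (rule exI[of _ "\<lambda>\<beta>. cf v \<beta> - c \<beta>"], auto)
  then show False using indep by blast
qed

lemma cf_add: "\<alpha> \<in> \<Delta> \<Longrightarrow> cf (x + y) \<alpha> = cf x \<alpha> + cf y \<alpha>"
  by (rule cf_unique) (simp add: scaleR_add_left sum.distrib cf_sum')

lemma cf_scale: "\<alpha> \<in> \<Delta> \<Longrightarrow> cf (r *\<^sub>R x) \<alpha> = r * cf x \<alpha>"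
proof (rule cf_unique)
  have "(\<Sum>\<alpha>\<in>\<Delta>. (r * cf x \<alpha>) *\<^sub>R \<alpha>) = r *\<^sub>R (\<Sum>\<alpha>\<in>\<Delta>. cf x \<alpha> *\<^sub>R \<alpha>)"
    by (simp add: scaleR_sum_right)
  then show "r *\<^sub>R x = (\<Sum>\<alpha>\<in>\<Delta>. (r * cf x \<alpha>) *\<^sub>R \<alpha>)" by (simp only: cf_sum')
qed

lemma cf_minus: "\<alpha> \<in> \<Delta> \<Longrightarrow> cf (- x) \<alpha> = - cf x \<alpha>"
  using cf_scale[of \<alpha> "-1" x] by simp

lemma cf_diff: "\<alpha> \<in> \<Delta> \<Longrightarrow> cf (x - y) \<alpha> = cf x \<alpha> - cf y \<alpha>"
  using cf_add[of \<alpha> x "-y"] cf_minus[of \<alpha> y] by simp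

lemma cf_sumg: "finite I \<Longrightarrow> \<alpha> \<in> \<Delta> \<Longrightarrow> cf (\<Sum>i\<in>I. f i) \<alpha> = (\<Sum>i\<in>I. cf (f i) \<alpha>)"
proof (induction I rule: finite_induct)
  case empty
  then show ?case using cf_scale[of \<alpha> 0 0] by simp
next
  case (insert x F)
  then show ?case by (simp add: cf_add)
qed

lemma cf_simple: assumes "a \<in> \<Delta>" "b \<in> \<Delta>" shows "cf a b = (if b = a then 1 else 0)"
proof (rule cf_unique[OF _ assms(2)])
  show "a = (\<Sum>\<alpha>\<in>\<Delta>. (if \<alpha> = a then 1 else 0) *\<^sub>R \<alpha>)"
  proof -
    have "(\<Sum>\<alpha>\<in>\<Delta>. (if \<alpha> = a then 1 else 0) *\<^sub>R \<alpha>) = (\<Sum>\<alpha>\<in>\<Delta>. if \<alpha> = a then \<alpha> else 0)"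
      by (rule sum.cong) auto
    also have "\<dots> = a" using assms(1) finD by (simp add: sum.delta)
    finally show ?thesis by simp
  qed
qed

definition pos :: "'a \<Rightarrow> bool" where "pos v \<longleftrightarrow> (\<forall>\<alpha>\<in>\<Delta>. cf v \<alpha> \<ge> 0)"

lemma root_rep: assumes "\<beta> \<in> \<Phi>"
  shows "(\<forall>\<alpha>\<in>\<Delta>. cf \<beta> \<alpha> \<in> \<int>) \<and> (pos \<beta> \<or> pos (-\<beta>))"
proof -
  obtain c where c: "\<forall>\<alpha>\<in>\<Delta>. c \<alpha> \<in> \<int>" "\<beta> = (\<Sum>\<alpha>\<in>\<Delta>. c \<alpha> *\<^sub>R \<alpha>)"
    "(\<forall>\<alpha>\<in>\<Delta>. c \<alpha> \<ge> 0) \<or> (\<forall>\<alpha>\<in>\<Delta>. c \<alpha> \<le> 0)"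
    using base assms unfolding is_base_def by blast
  have e: "\<alpha>\<in>\<Delta> \<Longrightarrow> cf \<beta> \<alpha> = c \<alpha>" for \<alpha> using cf_unique[OF c(2)] by blast
  show ?thesis using c(1,3) e by (auto simp: pos_def cf_minus)
qed

lemma not_both: "\<beta> \<in> \<Phi> \<Longrightarrow> pos \<beta> \<Longrightarrow> pos (-\<beta>) \<Longrightarrow> False"
proof -
  assume a: "\<beta> \<in> \<Phi>" "pos \<beta>" "pos (-\<beta>)"
  then have "\<forall>\<alpha>\<in>\<Delta>. cf \<beta> \<alpha> = 0" by (fastforce simp: pos_def cf_minus)
  then have "\<beta> = 0" using cf_sum'[of \<beta>] by simp
  then show False using a zPhi by simp
qed

lemma simple_pos: "\<alpha> \<in> \<Delta> \<Longrightarrow> pos \<alpha>"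
  by (auto simp: pos_def cf_simple)

lemma pos_roots_eq: "pos_roots \<Phi> \<Delta> = {\<beta>\<in>\<Phi>. pos \<beta>}"
proof -
  have "(\<exists>c. (\<forall>\<alpha>\<in>\<Delta>. c \<alpha> \<ge> 0) \<and> \<beta> = (\<Sum>\<alpha>\<in>\<Delta>. c \<alpha> *\<^sub>R \<alpha>)) \<longleftrightarrow> pos \<beta>" for \<beta>
  proof
    assume "\<exists>c. (\<forall>\<alpha>\<in>\<Delta>. c \<alpha> \<ge> 0) \<and> \<beta> = (\<Sum>\<alpha>\<in>\<Delta>. c \<alpha> *\<^sub>R \<alpha>)"
    then obtain c where "\<forall>\<alpha>\<in>\<Delta>. c \<alpha> \<ge> 0" "\<beta> = (\<Sum>\<alpha>\<in>\<Delta>. c \<alpha> *\<^sub>R \<alpha>)" by blast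
    then show "pos \<beta>" using cf_unique by (auto simp: pos_def)
  next
    assume "pos \<beta>" then show "\<exists>c. (\<forall>\<alpha>\<in>\<Delta>. c \<alpha> \<ge> 0) \<and> \<beta> = (\<Sum>\<alpha>\<in>\<Delta>. c \<alpha> *\<^sub>R \<alpha>)"
      using cf_sum'[of \<beta>] by (auto simp: pos_def)
  qed
  then show ?thesis unfolding pos_roots_def by auto
qed

lemma pos_sum: "finite I \<Longrightarrow> (\<And>i. i \<in> I \<Longrightarrow> c i \<ge> 0) \<Longrightarrow> (\<And>i. i \<in> I \<Longrightarrow> pos (f i))
   \<Longrightarrow> pos (\<Sum>i\<in>I. c i *\<^sub>R f i)"
  by (auto simp: pos_def cf_sumg cf_scale intro!: sum_nonneg)

lemma root_le_iff: "root_le \<Phi> \<Delta> x y \<longleftrightarrow> pos (y - x)"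
proof
  assume "root_le \<Phi> \<Delta> x y"
  then obtain c where c: "\<forall>\<beta>\<in>pos_roots \<Phi> \<Delta>. c \<beta> \<ge> 0" "y - x = (\<Sum>\<beta>\<in>pos_roots \<Phi> \<Delta>. c \<beta> *\<^sub>R \<beta>)"
    unfolding root_le_def by blast
  have "finite (pos_roots \<Phi> \<Delta>)" using finPhi pos_roots_eq by simp
  then show "pos (y - x)" unfolding c(2) using c(1) by (intro pos_sum) (auto simp: pos_roots_eq)
next
  assume p: "pos (y - x)"
  let ?P = "pos_roots \<Phi> \<Delta>"
  have fP: "finite ?P" using finPhi pos_roots_eq by simp
  have DP: "\<Delta> \<subseteq> ?P" using DPhi simple_pos pos_roots_eq by auto
  define c where "c \<beta> = (if \<beta> \<in> \<Delta> then cf (y - x) \<beta> else 0)" for \<beta>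
  have "(\<Sum>\<beta>\<in>?P. c \<beta> *\<^sub>R \<beta>) = (\<Sum>\<beta>\<in>\<Delta>. c \<beta> *\<^sub>R \<beta>)"
    by (rule sum.mono_neutral_right[OF fP DP]) (auto simp: c_def)
  also have "\<dots> = y - x" using cf_sum'[of "y - x"] by (simp add: c_def)
  finally show "root_le \<Phi> \<Delta> x y" unfolding root_le_def using p
    by (intro exI[of _ c]) (auto simp: c_def pos_def)
qed

end


context rs begin

lemma DnotZ: "0 \<notin> set ws" if "set ws \<subseteq> \<Delta>" using that DPhi zPhi by auto

lemma word_Phi: "set ws \<subseteq> \<Delta> \<Longrightarrow> \<beta> \<in> \<Phi> \<Longrightarrow> word_map ws \<beta> \<in> \<Phi>"
  by (induction ws) (use DPhi reflPhi in auto)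

lemma refl_cf: "a \<in> \<Delta> \<Longrightarrow> \<gamma> \<in> \<Delta> \<Longrightarrow> cf (refl a \<beta>) \<gamma> = cf \<beta> \<gamma> - (2 * (\<beta> \<bullet> a) / (a \<bullet> a)) * cf a \<gamma>"
  by (simp add: refl_def cf_diff cf_scale)

lemma refl_perm:
  assumes a: "a \<in> \<Delta>" and b: "\<beta> \<in> \<Phi>" "pos \<beta>" "\<beta> \<noteq> a"
  shows "pos (refl a \<beta>)"
proof -
  have "\<exists>\<gamma>\<in>\<Delta>. \<gamma> \<noteq> a \<and> cf \<beta> \<gamma> \<noteq> 0"
  proof (rule ccontr)
    assume "\<not> ?thesis"
    then have z: "\<forall>\<gamma>\<in>\<Delta>. \<gamma> \<noteq> a \<longrightarrow> cf \<beta> \<gamma> = 0" by blast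
    have "(\<Sum>\<alpha>\<in>\<Delta>. cf \<beta> \<alpha> *\<^sub>R \<alpha>) = (\<Sum>\<alpha>\<in>\<Delta>. if \<alpha> = a then cf \<beta> a *\<^sub>R a else 0)"
      by (rule sum.cong) (use z in auto)
    then have e: "\<beta> = cf \<beta> a *\<^sub>R a" using a finD by (simp add: sum.delta cf_sum')
    have "a \<in> \<Phi>" using a DPhi by auto
    then have "cf \<beta> a = 1 \<or> cf \<beta> a = -1" using multPhi[of a "cf \<beta> a"] e b(1) by simp
    moreover have "cf \<beta> a \<ge> 0" using b(2) a by (auto simp: pos_def)
    ultimately have "cf \<beta> a = 1" by auto
    then show False using e b(3) by simp
  qed
  then obtain \<gamma> where g: "\<gamma> \<in> \<Delta>" "\<gamma> \<noteq> a" "cf \<beta> \<gamma> \<noteq> 0" by blast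
  have gp: "cf \<beta> \<gamma> > 0" using g b(2) by (auto simp: pos_def less_le)
  have e: "cf (refl a \<beta>) \<gamma> = cf \<beta> \<gamma>" using refl_cf[OF a g(1)] cf_simple[OF a g(1)] g(2) by simp
  have r: "refl a \<beta> \<in> \<Phi>" using reflPhi a DPhi b(1) by auto
  show ?thesis
  proof (rule ccontr)
    assume "\<not> pos (refl a \<beta>)"
    then have "pos (- refl a \<beta>)" using root_rep[OF r] by blast
    then have "cf (- refl a \<beta>) \<gamma> \<ge> 0" using g(1) by (simp add: pos_def)
    then show False using e gp g(1) by (simp add: cf_minus)
  qed
qed

lemma exchange:
  assumes "set ws \<subseteq> \<Delta>" "\<alpha> \<in> \<Delta>" "pos (- word_map ws \<alpha>)"
  shows "\<exists>ws'. set ws' \<subseteq> \<Delta> \<and> length ws' < length ws \<and> word_map ws \<circ> refl \<alpha> = word_map ws'"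
  using assms
proof (induction ws)
  case Nil
  then show ?case using not_both[of \<alpha>] simple_pos DPhi by auto
next
  case (Cons a ws)
  let ?u = "word_map ws"
  have ws: "set ws \<subseteq> \<Delta>" and a: "a \<in> \<Delta>" using Cons.prems by auto
  have ua: "?u \<alpha> \<in> \<Phi>" using word_Phi[OF ws] Cons.prems DPhi by auto
  show ?case
  proof (cases "pos (- ?u \<alpha>)")
    case True
    then obtain ws' where w: "set ws' \<subseteq> \<Delta>" "length ws' < length ws" "?u \<circ> refl \<alpha> = word_map ws'"
      using Cons.IH ws Cons.prems(2) by blast
    have "word_map (a # ws) \<circ> refl \<alpha> = word_map (a # ws')"
      using w(3) by (metis comp_assoc word_map_Cons)
    moreover have "set (a # ws') \<subseteq> \<Delta>" "length (a # ws') < length (a # ws)" using w a by auto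
    ultimately show ?thesis by blast
  next
    case False
    then have p: "pos (?u \<alpha>)" using root_rep[OF ua] by blast
    have "?u \<alpha> = a"
    proof (rule ccontr)
      assume "?u \<alpha> \<noteq> a"
      then have "pos (refl a (?u \<alpha>))" using refl_perm[OF a ua p] by blast
      moreover have "pos (- refl a (?u \<alpha>))" using Cons.prems(3) by simp
      moreover have "refl a (?u \<alpha>) \<in> \<Phi>" using reflPhi a DPhi ua by auto
      ultimately show False using not_both by blast
    qed
    have o: "linear ?u" "\<And>x y. ?u x \<bullet> ?u y = x \<bullet> y" using word_map_orth[OF DnotZ[OF ws]] by auto
    have a0: "a \<noteq> 0" using a DPhi zPhi by auto
    have "word_map (a # ws) \<circ> refl \<alpha> = ?u"
    proof
      fix x
      have "?u (refl \<alpha> x) = refl a (?u x)" using refl_conj[OF o, of \<alpha> x] \<open>?u \<alpha> = a\<close> by simp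
      then show "(word_map (a # ws) \<circ> refl \<alpha>) x = ?u x" using refl_refl[OF a0] by simp
    qed
    moreover have "length ws < length (a # ws)" by simp
    ultimately show ?thesis using ws by blast
  qed
qed

definition ht :: "'a \<Rightarrow> real" where "ht \<beta> = (\<Sum>\<alpha>\<in>\<Delta>. cf \<beta> \<alpha>)"

lemma refl_word_pos:
  "\<forall>\<beta>. \<beta> \<in> \<Phi> \<longrightarrow> pos \<beta> \<longrightarrow> ht \<beta> \<le> real n \<longrightarrow> (\<exists>ws. set ws \<subseteq> \<Delta> \<and> refl \<beta> = word_map ws)"
proof (induction n)
  case 0
  show ?case
  proof (intro allI impI)
    fix \<beta> assume b: "\<beta> \<in> \<Phi>" "pos \<beta>" "ht \<beta> \<le> real 0"
    have "\<forall>\<alpha>\<in>\<Delta>. cf \<beta> \<alpha> = 0"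
      using b(2,3) finD sum_nonneg_eq_0_iff[of \<Delta> "cf \<beta>"] sum_nonneg[of \<Delta> "cf \<beta>"]
      by (auto simp: pos_def ht_def)
    then have "pos (- \<beta>)" by (simp add: pos_def cf_minus)
    then show "\<exists>ws. set ws \<subseteq> \<Delta> \<and> refl \<beta> = word_map ws" using not_both b by blast
  qed
next
  case (Suc n)
  show ?case
  proof (intro allI impI)
    fix \<beta> assume b: "\<beta> \<in> \<Phi>" "pos \<beta>" "ht \<beta> \<le> real (Suc n)"
    show "\<exists>ws. set ws \<subseteq> \<Delta> \<and> refl \<beta> = word_map ws"
    proof (cases "\<beta> \<in> \<Delta>")
      case True
      then show ?thesis by (intro exI[of _ "[\<beta>]"]) auto
    next
      case False
      have b0: "\<beta> \<noteq> 0" using b zPhi by auto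
      have "0 < \<beta> \<bullet> \<beta>" using b0 by simp
      also have "\<beta> \<bullet> \<beta> = \<beta> \<bullet> (\<Sum>\<alpha>\<in>\<Delta>. cf \<beta> \<alpha> *\<^sub>R \<alpha>)" by (simp add: cf_sum')
      also have "\<dots> = (\<Sum>\<alpha>\<in>\<Delta>. cf \<beta> \<alpha> * (\<beta> \<bullet> \<alpha>))" by (simp add: inner_sum_right)
      finally have "\<exists>\<alpha>\<in>\<Delta>. cf \<beta> \<alpha> * (\<beta> \<bullet> \<alpha>) > 0"
        by (metis (no_types, lifting) not_less sum_nonpos)
      then obtain \<alpha> where a: "\<alpha> \<in> \<Delta>" "cf \<beta> \<alpha> * (\<beta> \<bullet> \<alpha>) > 0" by blast
      have "cf \<beta> \<alpha> \<ge> 0" using b(2) a(1) by (simp add: pos_def)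
      then have ip: "\<beta> \<bullet> \<alpha> > 0" using a(2) by (metis mult_nonneg_nonpos not_le)
      have a0: "\<alpha> \<noteq> 0" using a(1) DPhi zPhi by auto
      define k where "k = 2 * (\<beta> \<bullet> \<alpha>) / (\<alpha> \<bullet> \<alpha>)"
      have kp: "k > 0" using ip a0 by (simp add: k_def)
      define \<beta>' where "\<beta>' = refl \<alpha> \<beta>"
      have b'Phi: "\<beta>' \<in> \<Phi>" using reflPhi a(1) DPhi b(1) by (auto simp: \<beta>'_def)
      have b'pos: "pos \<beta>'" unfolding \<beta>'_def using refl_perm[OF a(1) b(1,2)] False a(1) by blast
      have cfb': "\<gamma> \<in> \<Delta> \<Longrightarrow> cf \<beta>' \<gamma> = cf \<beta> \<gamma> - k * cf \<alpha> \<gamma>" for \<gamma>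
        unfolding \<beta>'_def k_def using refl_cf[OF a(1)] by simp
      have kint: "k \<in> \<int>"
      proof -
        have "k = cf \<beta> \<alpha> - cf \<beta>' \<alpha>" using cfb'[OF a(1)] cf_simple[OF a(1) a(1)] by simp
        then show ?thesis using root_rep[OF b(1)] root_rep[OF b'Phi] a(1) by auto
      qed
      have k1: "k \<ge> 1"
      proof -
        obtain z where z: "k = of_int z" using kint Ints_cases by blast
        then have "z > 0" using kp by simp
        then show ?thesis using z by simp
      qed
      have "ht \<beta>' = ht \<beta> - k * (\<Sum>\<gamma>\<in>\<Delta>. cf \<alpha> \<gamma>)"
        unfolding ht_def by (simp add: cfb' sum_subtractf sum_distrib_left)
      also have "(\<Sum>\<gamma>\<in>\<Delta>. cf \<alpha> \<gamma>) = 1"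
        using a(1) finD by (simp add: cf_simple sum.delta' cong: sum.cong)
      finally have "ht \<beta>' \<le> real n" using b(3) k1 by simp
      then obtain vs where vs: "set vs \<subseteq> \<Delta>" "refl \<beta>' = word_map vs" using Suc.IH b'Phi b'pos by blast
      have o: "linear (refl \<alpha>)" "\<And>x y. refl \<alpha> x \<bullet> refl \<alpha> y = x \<bullet> y" using refl_linear refl_inner[OF a0] by auto
      have bb: "\<beta> = refl \<alpha> \<beta>'" unfolding \<beta>'_def using refl_refl[OF a0] by simp
      have "refl \<beta> = word_map ([\<alpha>] @ vs @ [\<alpha>])"
      proof
        fix x
        have "refl \<beta> x = refl (refl \<alpha> \<beta>') (refl \<alpha> (refl \<alpha> x))" using bb refl_refl[OF a0] by simp
        also have "\<dots> = refl \<alpha> (refl \<beta>' (refl \<alpha> x))" by (rule refl_conj[OF o])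
        finally show "refl \<beta> x = word_map ([\<alpha>] @ vs @ [\<alpha>]) x" using vs(2) by (simp add: word_map_append)
      qed
      then show ?thesis using vs(1) a(1) by (intro exI[of _ "[\<alpha>] @ vs @ [\<alpha>]"]) simp
    qed
  qed
qed

lemma refl_word: assumes "\<beta> \<in> \<Phi>" shows "\<exists>ws. set ws \<subseteq> \<Delta> \<and> refl \<beta> = word_map ws"
proof -
  have b0: "\<beta> \<noteq> 0" using assms zPhi by auto
  consider "pos \<beta>" | "pos (-\<beta>)" using root_rep[OF assms] by blast
  then show ?thesis
  proof cases
    case 1
    obtain n :: nat where "ht \<beta> \<le> real n" using real_arch_simple by blast
    then show ?thesis using refl_word_pos[of n] 1 assms by blast
  next
    case 2
    have m: "-\<beta> \<in> \<Phi>" using reflPhi[OF assms assms] refl_self[OF b0] by simp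
    obtain n :: nat where "ht (-\<beta>) \<le> real n" using real_arch_simple by blast
    then obtain ws where "set ws \<subseteq> \<Delta>" "refl (-\<beta>) = word_map ws" using refl_word_pos[of n] 2 m by blast
    then show ?thesis using refl_neg[of \<beta>] by metis
  qed
qed

lemma generation: "w \<in> weyl_group \<Phi> \<Longrightarrow> \<exists>ws. set ws \<subseteq> \<Delta> \<and> w = word_map ws"
proof (induction rule: weyl_group.induct)
  case id_in
  then show ?case by (intro exI[of _ "[]"]) simp
next
  case (refl_comp w \<alpha>)
  then obtain ws vs where "set ws \<subseteq> \<Delta>" "w = word_map ws" "set vs \<subseteq> \<Delta>" "refl \<alpha> = word_map vs"
    using refl_word by blast
  then show ?case by (intro exI[of _ "vs @ ws"]) (simp add: word_map_append)
qed

end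

context rs begin

lemma key:
  assumes w: "w \<in> min_coset_reps \<Phi> \<Delta> \<alpha>i" and a: "\<alpha> \<in> \<Delta>" "\<alpha> \<noteq> \<alpha>i"
  shows "pos (w \<alpha>)"
proof (rule ccontr)
  assume np: "\<not> pos (w \<alpha>)"
  have wW: "w \<in> weyl_group \<Phi>" using w by (simp add: min_coset_reps_def)
  have ex: "\<exists>ws. set ws \<subseteq> \<Delta> \<and> length ws = k \<and> w = word_map ws" if "k = length ws1" "set ws1 \<subseteq> \<Delta>" "w = word_map ws1" for k ws1
    using that by blast
  obtain ws1 where "set ws1 \<subseteq> \<Delta>" "w = word_map ws1" using generation[OF wW] by blast
  then have "\<exists>k ws. set ws \<subseteq> \<Delta> \<and> length ws = k \<and> w = word_map ws" by blast
  then obtain ws0 where ws0: "set ws0 \<subseteq> \<Delta>" "length ws0 = weyl_length \<Delta> w" "w = word_map ws0"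
    unfolding weyl_length_def
    using LeastI_ex[where P="\<lambda>k. \<exists>ws. set ws \<subseteq> \<Delta> \<and> length ws = k \<and> w = word_map ws"] by blast
  have wa: "w \<alpha> \<in> \<Phi>" using word_Phi[OF ws0(1)] ws0(3) a(1) DPhi by auto
  then have "pos (- word_map ws0 \<alpha>)" using np root_rep ws0(3) by blast
  then obtain ws' where ws': "set ws' \<subseteq> \<Delta>" "length ws' < length ws0" "word_map ws0 \<circ> refl \<alpha> = word_map ws'"
    using exchange[OF ws0(1) a(1)] by blast
  have "weyl_length \<Delta> (w \<circ> refl \<alpha>) \<le> length ws'"
    unfolding weyl_length_def using ws' ws0(3) by (intro Least_le) blast
  then have "\<alpha> \<in> right_descents \<Delta> w" using ws'(2) ws0(2) a(1) by (simp add: right_descents_def)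
  then show False using w a(2) by (auto simp: min_coset_reps_def)
qed

end

theorem proposition5p5:
  fixes \<Phi> \<Delta> :: "'a::euclidean_space set" and \<theta> \<alpha>i \<gamma> \<gamma>' :: 'a
    and m :: "'a \<Rightarrow> real" and w :: "'a \<Rightarrow> 'a"
  assumes "root_system \<Phi>" and "crystallographic \<Phi>" and "irreducible_rs \<Phi>"
    and "is_base \<Phi> \<Delta>"
    and "highest_root \<Phi> \<Delta> \<theta>"
    and "\<theta> = (\<Sum>\<alpha>\<in>\<Delta>. m \<alpha> *\<^sub>R \<alpha>)"
    and "\<alpha>i \<in> \<Delta>" and "m \<alpha>i = 1"
    and "w \<in> min_coset_reps \<Phi> \<Delta> \<alpha>i"
    and "\<gamma> \<in> M_set \<Phi> \<Delta> \<alpha>i" and "\<gamma>' \<in> M_set \<Phi> \<Delta> \<alpha>i"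
    and "root_le \<Phi> \<Delta> \<gamma>' \<gamma>"
  shows "root_le \<Phi> \<Delta> (w \<gamma>') (w \<gamma>)"
proof -
  interpret rs \<Phi> \<Delta> using assms(1,4) by unfold_locales
  have th: "rs.cf \<Delta> \<theta> \<alpha>i = 1" using cf_unique[OF assms(6) assms(7)] assms(8) by simp
  have one: "cf g \<alpha>i = 1" if g: "g \<in> M_set \<Phi> \<Delta> \<alpha>i" for g
  proof -
    have gP: "g \<in> \<Phi>" and p1: "pos (g - \<alpha>i)" using g by (auto simp: M_set_def pos_roots_eq root_le_iff)
    have "root_le \<Phi> \<Delta> g \<theta>" using assms(5) gP by (simp add: highest_root_def)
    then have p2: "pos (\<theta> - g)" by (simp add: root_le_iff)
    have "cf (g - \<alpha>i) \<alpha>i \<ge> 0" using p1 assms(7) by (simp add: pos_def)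
    then have "cf g \<alpha>i \<ge> 1" using assms(7) by (simp add: cf_diff cf_simple)
    moreover have "cf g \<alpha>i \<le> 1" using p2 assms(7) th by (force simp: pos_def cf_diff)
    ultimately show ?thesis by simp
  qed
  define d where "d = \<gamma> - \<gamma>'"
  have pd: "pos d" using assms(12) by (simp add: root_le_iff d_def)
  have d0: "cf d \<alpha>i = 0" using one[OF assms(10)] one[OF assms(11)] assms(7) by (simp add: d_def cf_diff)
  have wW: "w \<in> weyl_group \<Phi>" using assms(9) by (simp add: min_coset_reps_def)
  obtain ws where ws: "set ws \<subseteq> \<Delta>" "w = word_map ws" using generation[OF wW] by blast
  have lw: "linear w" using word_map_orth[OF DnotZ[OF ws(1)]] ws(2) by simp
  have "w d = w (\<Sum>\<alpha>\<in>\<Delta>. cf d \<alpha> *\<^sub>R \<alpha>)" by (simp add: cf_sum')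
  also have "\<dots> = (\<Sum>\<alpha>\<in>\<Delta>. cf d \<alpha> *\<^sub>R w \<alpha>)" using lw by (simp add: linear_sum linear_scale)
  finally have wd: "w d = (\<Sum>\<alpha>\<in>\<Delta>. cf d \<alpha> *\<^sub>R w \<alpha>)" .
  have "pos (\<Sum>\<alpha>\<in>\<Delta>. cf d \<alpha> *\<^sub>R w \<alpha>)"
  proof -
    have "(\<Sum>\<alpha>\<in>\<Delta>. cf d \<alpha> *\<^sub>R w \<alpha>) = (\<Sum>\<alpha>\<in>\<Delta>-{\<alpha>i}. cf d \<alpha> *\<^sub>R w \<alpha>)"
      using d0 finD assms(7) by (simp add: sum.remove)
    moreover have "pos (\<Sum>\<alpha>\<in>\<Delta>-{\<alpha>i}. cf d \<alpha> *\<^sub>R w \<alpha>)"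
      using finD pd key[OF assms(9)] by (intro pos_sum) (auto simp: pos_def)
    ultimately show ?thesis by simp
  qed
  then have "pos (w \<gamma> - w \<gamma>')" using wd lw by (simp add: d_def linear_diff)
  then show ?thesis by (simp add: root_le_iff)
qed

end
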